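(* Let $\delta=\delta_1^{x_1}\cdots\delta_n^{x_n}$ with distinct primes $\delta_i$, and let $f$ be a function on $2\times2$ rational matrices. Writing elements of $\mathbb{M}_\delta$ as $A=\begin{pmatrix} n_1&l_1\\ n_2&\tfrac1\delta l_2\end{pmatrix}$, it holds, at least as a formal sum, $$\sum_{\substack{A\in\mathbb{M}_\delta,\ A\neq0,\ \det A=0\\ \delta_1\nmid l_2\,\wedge\dots\wedge\,\delta_n\nmid l_2}}f(A)=\frac12\sum_{l=0}^{n}(-1)^l\sum_{\delta^{(l)}\in\mathcal{C}_l(\delta)}\ \sum_{\substack{j,p\in\mathbb{Z}\\ (j,p)\neq(0,0)}}\ \sum_{P\in\Gamma_0(\delta)/\langle T\rangle}f\left(\begin{pmatrix}0&j\\0&\frac{\delta^{(l)}}{\delta}p\end{pmatrix}\cdot P\right).$$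
   Context: $\mathbb{M}_\delta=\{\begin{pmatrix} n_1&l_1\\ n_2&\tfrac1\delta l_2\end{pmatrix}: n_1,n_2,l_1,l_2\in\mathbb{Z}\}$. $\Gamma_0(\delta)=\{\begin{pmatrix}a&b\\ \delta c&d\end{pmatrix}\in\mathrm{SL}(2,\mathbb{Z})\}$, $T=\begin{pmatrix}1&1\\0&1\end{pmatrix}$, and $\Gamma_0(\delta)/\langle T\rangle$ is the set of classes of $\Gamma_0(\delta)$ under $P_1\sim P_2\iff P_1=T^mP_2$ for some $m\in\mathbb{Z}$ (the sum runs over one representative per class). $\mathcal{C}_l(\delta)$ is the set of all products of $l$ distinct prime factors of $\delta$, with $\mathcal{C}_0(\delta)=\{1\}$. *)

theory Defs
  imports "HOL-Analysis.Analysis"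
begin

text \<open>2x2 rational matrices are modelled as \<open>rat^2^2\<close>; rows/columns indexed by 1 and 2.\<close>

definition mat2 :: "'a \<Rightarrow> 'a \<Rightarrow> 'a \<Rightarrow> 'a \<Rightarrow> 'a^2^2" where
  "mat2 a b c d = (\<chi> i j. if i = 1 then (if j = 1 then a else b) else (if j = 1 then c else d))"

definition Mdelta :: "nat \<Rightarrow> (rat^2^2) set" where
  "Mdelta \<delta> = {mat2 (of_int n1) (of_int l1) (of_int n2) (of_int l2 / of_nat \<delta>) | n1 l1 n2 l2. True}"

definition Gamma0 :: "nat \<Rightarrow> (rat^2^2) set" where
  "Gamma0 \<delta> = {mat2 (of_int a) (of_int b) (of_int (int \<delta> * c)) (of_int d) | a b c d.
                 a * d - b * (int \<delta> * c) = 1}"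

definition Tpow :: "int \<Rightarrow> rat^2^2" where
  "Tpow m = mat2 1 (of_int m) 0 1"

definition Trel :: "nat \<Rightarrow> ((rat^2^2) \<times> (rat^2^2)) set" where
  "Trel \<delta> = {(P1, P2). P1 \<in> Gamma0 \<delta> \<and> P2 \<in> Gamma0 \<delta> \<and> (\<exists>m. P1 = Tpow m ** P2)}"

definition Gamma0_mod_T :: "nat \<Rightarrow> (rat^2^2) set set" where
  "Gamma0_mod_T \<delta> = Gamma0 \<delta> // Trel \<delta>"

definition Cl :: "nat \<Rightarrow> nat \<Rightarrow> nat set" where
  "Cl l \<delta> = {\<Prod>S | S. S \<subseteq> prime_factors \<delta> \<and> card S = l}"

end

theory Submission
  imports Defs "HOL-Computational_Algebra.Primes"
begin


lemma mat2_nth[simp]: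
  "mat2 a b c d $ 1 $ 1 = a" "mat2 a b c d $ 1 $ 2 = b"
  "mat2 a b c d $ 2 $ 1 = c" "mat2 a b c d $ 2 $ 2 = d"
  by (simp_all add: mat2_def)

lemma mat2_eta: "A = mat2 (A$1$1) (A$1$2) (A$2$1) (A$2$2)"
  unfolding mat2_def by (simp add: vec_eq_iff forall_2)

lemma mat2_eq_iff: "mat2 a b c d = mat2 a' b' c' d' \<longleftrightarrow> a=a' \<and> b=b' \<and> c=c' \<and> d=d'"
  by (metis mat2_nth)

lemma mat2_mult: "mat2 a b c d ** mat2 a' b' c' d' =
   mat2 (a*a'+b*c') (a*b'+b*d') (c*a'+d*c') (c*b'+d*d')"
  by (simp add: vec_eq_iff forall_2 matrix_matrix_mult_def sum_2 mat2_def)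

lemma det_mat2: "det (mat2 a b c d) = a*d - b*(c::'a::comm_ring_1)"
  by (simp add: det_2)

lemma mat2_zero: "mat2 a b c d = 0 \<longleftrightarrow> a=0 \<and> b=0 \<and> c=0 \<and> d=0"
  by (metis mat2_eta mat2_nth zero_index)



lemma Gamma0_iff: "P \<in> Gamma0 \<delta> \<longleftrightarrow> (\<exists>a b c d. P = mat2 (of_int a) (of_int b) (of_int (int \<delta> * c)) (of_int d) \<and> a * d - b * (int \<delta> * c) = 1)"
  unfolding Gamma0_def by blast

lemma Tpow_mult: "Tpow m ** P = mat2 (P$1$1 + of_int m * P$2$1) (P$1$2 + of_int m * P$2$2) (P$2$1) (P$2$2)"
  apply (subst (1) mat2_eta[of P])
  by (simp add: Tpow_def mat2_mult)

lemma class_eq: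
  assumes "P0 \<in> Gamma0 \<delta>"
  shows "Trel \<delta> `` {P0} = {P \<in> Gamma0 \<delta>. P$2$1 = P0$2$1 \<and> P$2$2 = P0$2$2}"
proof (rule set_eqI, rule iffI)
  fix P assume "P \<in> Trel \<delta> `` {P0}"
  then obtain m where "P \<in> Gamma0 \<delta>" "P0 = Tpow m ** P" unfolding Trel_def by auto
  then show "P \<in> {P \<in> Gamma0 \<delta>. P$2$1 = P0$2$1 \<and> P$2$2 = P0$2$2}"
    by (simp add: Tpow_mult)
next
  fix P assume P: "P \<in> {P \<in> Gamma0 \<delta>. P$2$1 = P0$2$1 \<and> P$2$2 = P0$2$2}"
  obtain a b c d where Pd: "P = mat2 (of_int a) (of_int b) (of_int (int \<delta> * c)) (of_int d)"
    and h: "a * d - b * (int \<delta> * c) = 1" using P Gamma0_iff by blast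
  obtain a' b' c' d' where P0d: "P0 = mat2 (of_int a') (of_int b') (of_int (int \<delta> * c')) (of_int d')"
    and h': "a' * d' - b' * (int \<delta> * c') = 1" using assms Gamma0_iff by blast
  have e1: "int \<delta> * c' = int \<delta> * c" and e2: "d' = d" using P by (auto simp: Pd P0d)
  define C where "C = int \<delta> * c"
  define m where "m = -(a'-a)*b + (b'-b)*a"
  have k: "(a'-a) * d = (b'-b) * C" using h h' e1 e2 unfolding C_def by (simp add: algebra_simps)
  have m1: "a' = a + m * C"
  proof -
    have "m * C = -(a'-a)*b*C + a*((b'-b)*C)" unfolding m_def by (simp add: algebra_simps)
    also have "\<dots> = -(a'-a)*b*C + a*((a'-a)*d)" by (simp only: k)
    also have "\<dots> = (a'-a)*(a*d - b*C)" by (simp add: algebra_simps)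
    finally show ?thesis using h unfolding C_def by simp
  qed
  have m2: "b' = b + m * d"
  proof -
    have "m * d = -b*((a'-a)*d) + (b'-b)*a*d" unfolding m_def by (simp add: algebra_simps)
    also have "\<dots> = -b*((b'-b)*C) + (b'-b)*a*d" by (simp only: k)
    also have "\<dots> = (b'-b)*(a*d - b*C)" by (simp add: algebra_simps)
    finally show ?thesis using h unfolding C_def by simp
  qed
  have "P0 = Tpow m ** P"
    unfolding Tpow_mult Pd P0d using m1 m2 e1 e2 unfolding C_def by (simp add: mat2_eq_iff)
  then show "P \<in> Trel \<delta> `` {P0}" using P assms unfolding Trel_def by auto
qed

lemma Gamma0_int:
  assumes "P \<in> Gamma0 \<delta>"
  shows "P$2$1 = of_int \<lfloor>P$2$1\<rfloor>" "P$2$2 = of_int \<lfloor>P$2$2\<rfloor>"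
    "int \<delta> dvd \<lfloor>P$2$1\<rfloor>" "coprime \<lfloor>P$2$1\<rfloor> \<lfloor>P$2$2\<rfloor>"
proof -
  obtain a b c d where Pd: "P = mat2 (of_int a) (of_int b) (of_int (int \<delta> * c)) (of_int d)"
    and h: "a * d - b * (int \<delta> * c) = 1" using assms Gamma0_iff by blast
  show "P$2$1 = of_int \<lfloor>P$2$1\<rfloor>" "P$2$2 = of_int \<lfloor>P$2$2\<rfloor>" "int \<delta> dvd \<lfloor>P$2$1\<rfloor>"
    by (simp add: Pd, simp add: Pd, simp only: Pd mat2_nth floor_of_int, simp)
  have "coprime (int \<delta> * c) d"
    by (rule coprimeI) (metis dvd_diff dvd_mult h mult.commute)
  then show "coprime \<lfloor>P$2$1\<rfloor> \<lfloor>P$2$2\<rfloor>" by (simp only: Pd mat2_nth floor_of_int)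
qed

definition Vset :: "nat \<Rightarrow> (int \<times> int) set" where
  "Vset \<delta> = {(C, e). int \<delta> dvd C \<and> coprime C e}"

definition botv :: "(rat^2^2) set \<Rightarrow> int \<times> int" where
  "botv X = (\<lfloor>(SOME P. P \<in> X)$2$1\<rfloor>, \<lfloor>(SOME P. P \<in> X)$2$2\<rfloor>)"

lemma Gmod_cases:
  assumes "X \<in> Gamma0_mod_T \<delta>"
  obtains P0 where "P0 \<in> Gamma0 \<delta>" "X = {P \<in> Gamma0 \<delta>. P$2$1 = P0$2$1 \<and> P$2$2 = P0$2$2}"
  using assms unfolding Gamma0_mod_T_def quotient_def by (auto simp: class_eq)

lemma rep_props:
  assumes "X \<in> Gamma0_mod_T \<delta>"
  shows "(SOME P. P \<in> X) \<in> Gamma0 \<delta>"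
    "(SOME P. P \<in> X)$2$1 = of_int (fst (botv X))" "(SOME P. P \<in> X)$2$2 = of_int (snd (botv X))"
    "botv X \<in> Vset \<delta>"
proof -
  obtain P0 where P0: "P0 \<in> Gamma0 \<delta>" "X = {P \<in> Gamma0 \<delta>. P$2$1 = P0$2$1 \<and> P$2$2 = P0$2$2}"
    using Gmod_cases assms by blast
  have "P0 \<in> X" using P0 by auto
  then have "(SOME P. P \<in> X) \<in> X" by (rule someI)
  then show g: "(SOME P. P \<in> X) \<in> Gamma0 \<delta>" using P0 by auto
  show "(SOME P. P \<in> X)$2$1 = of_int (fst (botv X))" "(SOME P. P \<in> X)$2$2 = of_int (snd (botv X))"
    using Gamma0_int[OF g] by (simp_all add: botv_def)
  show "botv X \<in> Vset \<delta>" using Gamma0_int[OF g] by (simp add: botv_def Vset_def)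
qed

lemma botv_bij: "bij_betw botv (Gamma0_mod_T \<delta>) (Vset \<delta>)"
proof (rule bij_betw_imageI)
  show "inj_on botv (Gamma0_mod_T \<delta>)"
  proof (rule inj_onI)
    fix X Y assume X: "X \<in> Gamma0_mod_T \<delta>" and Y: "Y \<in> Gamma0_mod_T \<delta>" and eq: "botv X = botv Y"
    obtain P0 where P0: "P0 \<in> Gamma0 \<delta>" "X = {P \<in> Gamma0 \<delta>. P$2$1 = P0$2$1 \<and> P$2$2 = P0$2$2}"
      using Gmod_cases X by blast
    obtain Q0 where Q0: "Q0 \<in> Gamma0 \<delta>" "Y = {P \<in> Gamma0 \<delta>. P$2$1 = Q0$2$1 \<and> P$2$2 = Q0$2$2}"
      using Gmod_cases Y by blast
    have "(SOME P. P \<in> X) \<in> X" by (rule someI[of _ P0]) (use P0 in auto)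
    then have x1: "P0$2$1 = of_int (fst (botv X))" "P0$2$2 = of_int (snd (botv X))"
      using rep_props(2,3)[OF X] P0(2) by (simp_all add: Ball_def)
    have "(SOME P. P \<in> Y) \<in> Y" by (rule someI[of _ Q0]) (use Q0 in auto)
    then have y1: "Q0$2$1 = of_int (fst (botv Y))" "Q0$2$2 = of_int (snd (botv Y))"
      using rep_props(2,3)[OF Y] Q0(2) by (simp_all add: Ball_def)
    have "P0$2$1 = Q0$2$1 \<and> P0$2$2 = Q0$2$2"
      using x1 y1 eq by simp
    then show "X = Y" using P0 Q0 by auto
  qed
next
  show "botv ` Gamma0_mod_T \<delta> = Vset \<delta>"
  proof
    show "botv ` Gamma0_mod_T \<delta> \<subseteq> Vset \<delta>" using rep_props(4) by blast
  next
    show "Vset \<delta> \<subseteq> botv ` Gamma0_mod_T \<delta>"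
    proof
      fix v assume "v \<in> Vset \<delta>"
      then obtain C e where v0: "v = (C, e)" "int \<delta> dvd C" "coprime C e"
        unfolding Vset_def by auto
      then obtain c where "C = int \<delta> * c" by (auto elim!: dvdE)
      then have v: "v = (int \<delta> * c, e)" "coprime (int \<delta> * c) e" using v0 by auto
      obtain u w where uw: "u * (int \<delta> * c) + w * e = 1"
        using bezout_int[of "int \<delta> * c" e] v by auto
      define P0 :: "rat^2^2" where "P0 = mat2 (of_int w) (of_int (-u)) (of_int (int \<delta> * c)) (of_int e)"
      have P0G: "P0 \<in> Gamma0 \<delta>" unfolding P0_def Gamma0_iff
        by (rule exI[of _ w], rule exI[of _ "-u"], rule exI[of _ c], rule exI[of _ e])
           (use uw in \<open>simp add: algebra_simps\<close>)
      define X where "X = Trel \<delta> `` {P0}"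
      have XG: "X \<in> Gamma0_mod_T \<delta>" unfolding X_def Gamma0_mod_T_def using P0G
        by (simp add: quotientI)
      have Xe: "X = {P \<in> Gamma0 \<delta>. P$2$1 = P0$2$1 \<and> P$2$2 = P0$2$2}"
        unfolding X_def using class_eq[OF P0G] .
      have "(SOME P. P \<in> X) \<in> X" by (rule someI[of _ P0]) (use P0G Xe in auto)
      then have r: "(SOME P. P \<in> X)$2$1 = P0$2$1" "(SOME P. P \<in> X)$2$2 = P0$2$2"
        using Xe by blast+
      have "rat_of_int (fst (botv X)) = of_int (int \<delta> * c)" "rat_of_int (snd (botv X)) = of_int e"
        using r rep_props(2,3)[OF XG] unfolding P0_def mat2_nth by metis+
      then have "botv X = v" using v(1) by (simp only: of_int_eq_iff prod_eq_iff fst_conv snd_conv)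
      then show "v \<in> botv ` Gamma0_mod_T \<delta>" using XG by blast
    qed
  qed
qed

lemma mult_by_rep:
  "mat2 0 j 0 q ** R = mat2 (j * R$2$1) (j * R$2$2) (q * R$2$1) (q * R$2$2)"
proof -
  have "mat2 0 j 0 q ** R = mat2 0 j 0 q ** mat2 (R$1$1) (R$1$2) (R$2$1) (R$2$2)"
    using mat2_eta[of R] by metis
  also have "\<dots> = mat2 (j * R$2$1) (j * R$2$2) (q * R$2$1) (q * R$2$2)"
    by (simp only: mat2_mult) simp
  finally show ?thesis .
qed

lemma inner_reindex:
  fixes f :: "rat^2^2 \<Rightarrow> complex"
  shows "(\<Sum>\<^sub>\<infinity>X\<in>Gamma0_mod_T \<delta>. f (mat2 0 j 0 q ** (SOME P. P \<in> X)))
       = (\<Sum>\<^sub>\<infinity>v\<in>Vset \<delta>. f (mat2 (j * of_int (fst v)) (j * of_int (snd v)) (q * of_int (fst v)) (q * of_int (snd v))))"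
proof -
  have "(\<Sum>\<^sub>\<infinity>X\<in>Gamma0_mod_T \<delta>. f (mat2 0 j 0 q ** (SOME P. P \<in> X)))
     = (\<Sum>\<^sub>\<infinity>X\<in>Gamma0_mod_T \<delta>. (\<lambda>v. f (mat2 (j * of_int (fst v)) (j * of_int (snd v)) (q * of_int (fst v)) (q * of_int (snd v)))) (botv X))"
  proof (rule infsum_cong)
    fix X assume X: "X \<in> Gamma0_mod_T \<delta>"
    show "f (mat2 0 j 0 q ** (SOME P. P \<in> X)) = (\<lambda>v. f (mat2 (j * of_int (fst v)) (j * of_int (snd v)) (q * of_int (fst v)) (q * of_int (snd v)))) (botv X)"
      unfolding mult_by_rep rep_props(2,3)[OF X] by (rule refl)
  qed
  also have "\<dots> = (\<Sum>\<^sub>\<infinity>v\<in>Vset \<delta>. f (mat2 (j * of_int (fst v)) (j * of_int (snd v)) (q * of_int (fst v)) (q * of_int (snd v))))"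
    by (rule infsum_reindex_bij_betw[OF botv_bij])
  finally show ?thesis .
qed



lemma prop_unique:
  fixes C e C' e' :: int
  assumes "coprime C e" "coprime C' e'" "C * e' = C' * e"
  shows "(C' = C \<and> e' = e) \<or> (C' = -C \<and> e' = -e)"
proof -
  have "C dvd C' * e" using assms(3) by (metis dvd_triv_left)
  then have d1: "C dvd C'" using assms(1) by (simp add: coprime_dvd_mult_left_iff)
  have "C' dvd C * e'" using assms(3) by (metis dvd_triv_left)
  then have d2: "C' dvd C" using assms(2) by (simp add: coprime_dvd_mult_left_iff)
  have "e dvd e' * C" using assms(3) by (metis dvd_triv_right mult.commute)
  then have d3: "e dvd e'" using assms(1) by (simp add: coprime_dvd_mult_left_iff coprime_commute)
  have "e' dvd e * C'" using assms(3) by (metis dvd_triv_right mult.commute)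
  then have d4: "e' dvd e" using assms(2) by (simp add: coprime_dvd_mult_left_iff coprime_commute)
  have a1: "\<bar>C\<bar> = \<bar>C'\<bar>" using zdvd_antisym_abs[OF d1 d2] .
  have a2: "\<bar>e\<bar> = \<bar>e'\<bar>" using zdvd_antisym_abs[OF d3 d4] .
  have nz: "C \<noteq> 0 \<or> e \<noteq> 0" using assms(1) by auto
  show ?thesis
  proof (cases "C = 0")
    case True
    then have "C' = 0" using a1 by simp
    then show ?thesis using a2 True by (auto simp: abs_eq_iff)
  next
    case False
    then have "C' = C \<or> C' = -C" using a1 by (auto simp: abs_eq_iff)
    then show ?thesis
    proof
      assume h: "C' = C"
      then have "C * e' = C * e" using assms(3) by simp
      then show ?thesis using h False by simp
    next
      assume h: "C' = -C"
      then have "C * e' = C * (-e)" using assms(3) by simp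
      then have "e' = -e" using False by (metis mult_left_cancel)
      then show ?thesis using h by simp
    qed
  qed
qed

lemma cancel2: "C \<noteq> 0 \<or> e \<noteq> 0 \<Longrightarrow> a*C = b*C \<Longrightarrow> a*e = b*(e::int) \<Longrightarrow> a = b"
  by auto

lemma rep_unique:
  fixes j s C e j' s' C' e' :: int
  assumes "coprime C e" "coprime C' e'" "(j, s) \<noteq> (0, 0)"
    and "j * C = j' * C'" "j * e = j' * e'" "s * C = s' * C'" "s * e = s' * e'"
  shows "(j' = j \<and> s' = s \<and> C' = C \<and> e' = e) \<or> (j' = -j \<and> s' = -s \<and> C' = -C \<and> e' = -e)"
proof -
  have "j * (C * e' - C' * e) = (j*C)*e' - (j*e)*C'" by (simp add: algebra_simps)
  also have "\<dots> = 0" unfolding assms(4,5) by (simp add: algebra_simps)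
  finally have z1: "j * (C * e' - C' * e) = 0" .
  have "s * (C * e' - C' * e) = (s*C)*e' - (s*e)*C'" by (simp add: algebra_simps)
  also have "\<dots> = 0" unfolding assms(6,7) by (simp add: algebra_simps)
  finally have z2: "s * (C * e' - C' * e) = 0" .
  have "C * e' - C' * e = 0" using z1 z2 assms(3) by auto
  then have "C * e' = C' * e" by simp
  then have cs: "(C' = C \<and> e' = e) \<or> (C' = -C \<and> e' = -e)" using prop_unique assms(1,2) by blast
  have nz: "C \<noteq> 0 \<or> e \<noteq> 0" using assms(1) by auto
  from cs show ?thesis
  proof
    assume h: "C' = C \<and> e' = e"
    then have "j' = j" using cancel2[OF nz, of j j'] assms(4,5) by simp
    moreover have "s' = s" using h cancel2[OF nz, of s s'] assms(6,7) by simp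
    ultimately show ?thesis using h by simp
  next
    assume h: "C' = -C \<and> e' = -e"
    then have "j' = -j" using cancel2[OF nz, of j "-j'"] assms(4,5) by simp
    moreover have "s' = -s" using h cancel2[OF nz, of s "-s'"] assms(6,7) by simp
    ultimately show ?thesis using h by simp
  qed
qed

definition Phi :: "nat \<Rightarrow> int \<Rightarrow> int \<Rightarrow> int \<Rightarrow> int \<Rightarrow> rat^2^2" where
  "Phi \<delta> j s C e = mat2 (of_int (j*C)) (of_int (j*e)) (of_int (s*C) / of_nat \<delta>) (of_int (s*e) / of_nat \<delta>)"

lemma Phi_eq:
  assumes "\<delta> > 0"
  shows "Phi \<delta> j s C e = Phi \<delta> j' s' C' e' \<longleftrightarrow> j*C = j'*C' \<and> j*e = j'*e' \<and> s*C = s'*C' \<and> s*e = s'*e'"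
  using assms unfolding Phi_def mat2_eq_iff by (simp add: divide_cancel_right del: of_int_mult)



definition Lset :: "nat \<Rightarrow> (rat^2^2) set" where
  "Lset \<delta> = {A \<in> Mdelta \<delta>. A \<noteq> 0 \<and> det A = 0 \<and>
              (\<forall>p\<in>prime_factors \<delta>. \<not> int p dvd \<lfloor>of_nat \<delta> * A $ 2 $ 2\<rfloor>)}"

lemma prime_dvd_V:
  assumes "(C, e) \<in> Vset \<delta>" "p \<in> prime_factors \<delta>"
  shows "int p dvd s * e \<longleftrightarrow> int p dvd s"
proof -
  have pp: "prime (int p)" using assms(2) by auto
  have "int p dvd int \<delta>" using assms(2) by (auto simp: in_prime_factors_iff)
  then have pC: "int p dvd C" using assms(1) unfolding Vset_def by (auto intro: dvd_trans)
  have "\<not> int p dvd e"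
  proof
    assume "int p dvd e"
    moreover have "coprime C e" using assms(1) unfolding Vset_def by auto
    ultimately have "is_unit (int p)" using pC by (metis coprime_common_divisor)
    then show False using pp by (simp add: not_prime_unit)
  qed
  then show ?thesis using pp by (auto simp: prime_dvd_mult_iff)
qed

lemma V_nz: "(C, e) \<in> Vset \<delta> \<Longrightarrow> C \<noteq> 0 \<or> e \<noteq> 0"
  unfolding Vset_def by auto

lemma Phi_in_L:
  assumes "\<delta> > 0" "(j, s) \<noteq> (0, 0)" "(C, e) \<in> Vset \<delta>"
  shows "Phi \<delta> j s C e \<in> Lset \<delta> \<longleftrightarrow> (\<forall>p\<in>prime_factors \<delta>. \<not> int p dvd s)"
proof -
  obtain c where c: "C = int \<delta> * c" using assms(3) unfolding Vset_def by (auto elim: dvdE)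
  have dpos: "(of_nat \<delta> :: rat) \<noteq> 0" using assms(1) by simp
  have e3: "(of_int (s*C) / of_nat \<delta> :: rat) = of_int (s*c)"
    using dpos unfolding c by (simp add: field_simps)
  have inM: "Phi \<delta> j s C e \<in> Mdelta \<delta>"
    unfolding Mdelta_def Phi_def e3 by blast
  have nz: "Phi \<delta> j s C e \<noteq> 0"
  proof
    assume "Phi \<delta> j s C e = 0"
    then have "j*C = 0" "j*e = 0" "s*C = 0" "s*e = 0"
      using dpos unfolding Phi_def mat2_zero by (simp_all del: of_int_mult)
    then show False using V_nz[OF assms(3)] assms(2) by auto
  qed
  have det0: "det (Phi \<delta> j s C e) = 0"
    unfolding Phi_def det_mat2 by (simp add: field_simps)
  have fl: "\<lfloor>of_nat \<delta> * Phi \<delta> j s C e $ 2 $ 2\<rfloor> = s * e"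
    unfolding Phi_def mat2_nth using dpos by (simp del: of_int_mult)
  show ?thesis
    unfolding Lset_def using inM nz det0 fl prime_dvd_V[OF assms(3)] by auto
qed

lemma rank1_decomp:
  fixes x1 y1 x2 y2 :: int
  assumes "x1 * y2 = y1 * x2" "(x2, y2) \<noteq> (0, 0)"
  shows "\<exists>j C e. coprime C e \<and> x1 = j*C \<and> y1 = j*e \<and> x2 = gcd x2 y2 * C \<and> y2 = gcd x2 y2 * e"
proof -
  define g where "g = gcd x2 y2"
  have g0: "g \<noteq> 0" using assms(2) unfolding g_def by auto
  define C where "C = x2 div g"
  define e where "e = y2 div g"
  have cop: "coprime C e" unfolding C_def e_def g_def using assms(2) by (intro div_gcd_coprime) auto
  have x2: "x2 = g * C" unfolding C_def g_def by simp
  have y2: "y2 = g * e" unfolding e_def g_def by simp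
  have "g * (x1 * e) = g * (y1 * C)" using assms(1) unfolding x2 y2 by (simp add: algebra_simps)
  then have k: "x1 * e = y1 * C" using g0 by simp
  obtain u v where uv: "u * C + v * e = 1" using bezout_int[of C e] cop by auto
  define j where "j = u * x1 + v * y1"
  have "j * C = u * x1 * C + v * (y1 * C)" unfolding j_def by (simp add: algebra_simps)
  also have "\<dots> = x1 * (u * C + v * e)" unfolding k[symmetric] by (simp add: algebra_simps)
  finally have j1: "x1 = j * C" using uv by simp
  have "j * e = u * (x1 * e) + v * y1 * e" unfolding j_def by (simp add: algebra_simps)
  also have "\<dots> = y1 * (u * C + v * e)" unfolding k by (simp add: algebra_simps)
  finally have j2: "y1 = j * e" using uv by simp
  show ?thesis using cop j1 j2 x2 y2 unfolding g_def by blast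
qed

lemma exists_rep:
  assumes "\<delta> > 0" "A \<in> Lset \<delta>"
  shows "\<exists>j s C e. (j, s) \<noteq> (0, 0) \<and> (C, e) \<in> Vset \<delta> \<and> A = Phi \<delta> j s C e"
proof -
  obtain n1 l1 n2 l2 where A: "A = mat2 (of_int n1) (of_int l1) (of_int n2) (of_int l2 / of_nat \<delta>)"
    using assms(2) unfolding Lset_def Mdelta_def by blast
  have dpos: "(of_nat \<delta> :: rat) \<noteq> 0" using assms(1) by simp
  have "det A = 0" using assms(2) unfolding Lset_def by blast
  then have "(of_int n1 * (of_int l2 / of_nat \<delta>) - of_int l1 * of_int n2 :: rat) = 0"
    unfolding A det_mat2 .
  then have "(of_int (n1 * l2) :: rat) = of_int (l1 * (int \<delta> * n2))"
    using dpos by (simp add: field_simps)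
  then have det: "n1 * l2 = l1 * (int \<delta> * n2)" by (simp only: of_int_eq_iff)
  have fl: "\<lfloor>of_nat \<delta> * A $ 2 $ 2\<rfloor> = l2" unfolding A mat2_nth using dpos by simp
  have ndiv: "\<forall>p\<in>prime_factors \<delta>. \<not> int p dvd l2" using assms(2) fl unfolding Lset_def by auto
  have cop: "coprime l2 (int \<delta>)"
  proof (rule ccontr)
    assume nc: "\<not> coprime l2 (int \<delta>)"
    define g where "g = nat (gcd l2 (int \<delta>))"
    have "g \<noteq> 1" using nc unfolding g_def by (auto simp: coprime_iff_gcd_eq_1)
    then obtain p where p: "prime p" "p dvd g" using prime_factor_nat by blast
    have "int p dvd int g" using p(2) by simp
    moreover have "int g = gcd l2 (int \<delta>)" unfolding g_def by simp
    ultimately have "int p dvd gcd l2 (int \<delta>)" by simp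
    then have "int p dvd l2" "int p dvd int \<delta>" by auto
    then have "p \<in> prime_factors \<delta>" using p(1) assms(1) by (auto simp: in_prime_factors_iff)
    then show False using ndiv \<open>int p dvd l2\<close> by blast
  qed
  have Anz: "A \<noteq> 0" using assms(2) unfolding Lset_def by blast
  show ?thesis
  proof (cases "(int \<delta> * n2, l2) = (0, 0)")
    case False
    from rank1_decomp[OF det False] obtain j C e where
      d: "coprime C e" "n1 = j*C" "l1 = j*e" "int \<delta> * n2 = gcd (int \<delta> * n2) l2 * C"
         "l2 = gcd (int \<delta> * n2) l2 * e"
      by blast
    define g where "g = gcd (int \<delta> * n2) l2"
    have g0: "g \<noteq> 0" using False unfolding g_def by auto
    have "coprime g (int \<delta>)"
      using cop unfolding g_def by (meson coprime_imp_coprime dvd_trans gcd_dvd2)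
    moreover have "int \<delta> dvd g * C" using d(4) unfolding g_def by (metis dvd_triv_left)
    ultimately have dC: "int \<delta> dvd C" by (metis coprime_commute coprime_dvd_mult_right_iff)
    have "A = Phi \<delta> j g C e"
      unfolding A Phi_def mat2_eq_iff using d dpos unfolding g_def[symmetric]
      by (simp del: of_int_mult add: field_simps flip: of_int_mult) (metis of_int_mult of_int_of_nat_eq)
    then show ?thesis using g0 d(1) dC unfolding Vset_def by auto
  next
    case True
    then have n2: "n2 = 0" and l2: "l2 = 0" using assms(1) by auto
    then have "\<delta> = 1" using cop by simp
    have "(n1, l1) \<noteq> (0, 0)" using Anz unfolding A n2 l2 by (auto simp: mat2_zero)
    from rank1_decomp[OF _ this, of 0 0] obtain j C e where
      d: "coprime C e" "n1 = gcd n1 l1 * C" "l1 = gcd n1 l1 * e" by auto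
    have g0: "gcd n1 l1 \<noteq> 0" using \<open>(n1, l1) \<noteq> (0, 0)\<close> by auto
    have "A = Phi \<delta> (gcd n1 l1) 0 C e"
      unfolding A Phi_def n2 l2 mat2_eq_iff using d by (simp del: of_int_mult)
    then show ?thesis using g0 d(1) \<open>\<delta> = 1\<close> unfolding Vset_def by (intro exI[of _ "gcd n1 l1"] exI[of _ "0::int"] exI[of _ C] exI[of _ e]) auto
  qed
qed



lemma prod_primes_dvd:
  fixes s :: int
  assumes "finite S" "\<forall>p\<in>S. prime p"
  shows "int (\<Prod>S) dvd s \<longleftrightarrow> (\<forall>p\<in>S. int p dvd s)"
  using assms
proof (induction S rule: finite_induct)
  case empty
  then show ?case by simp
next
  case (insert p S)
  have pp: "prime p" using insert by auto
  have "\<not> p dvd \<Prod>S"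
  proof
    assume "p dvd \<Prod>S"
    then obtain q where "q \<in> S" "p dvd q" using prime_dvd_prod_iff[OF insert(1) pp, of "\<lambda>x. x"] by auto
    then have "p = q" using insert(4) pp by (auto intro: primes_dvd_imp_eq)
    then show False using insert(2) \<open>q \<in> S\<close> by simp
  qed
  then have "coprime p (\<Prod>S)" by (rule prime_imp_coprime[OF pp])
  then have cop: "coprime (int p) (int (\<Prod>S))" by (simp only: coprime_int_iff)
  have e: "int (\<Prod>(insert p S)) = int p * int (\<Prod>S)" using insert(1,2) by (simp del: of_nat_prod)
  have "int p * int (\<Prod>S) dvd s \<longleftrightarrow> int p dvd s \<and> int (\<Prod>S) dvd s"
    using cop by (meson divides_mult dvd_mult_left dvd_mult_right)
  then have "int (\<Prod>(insert p S)) dvd s \<longleftrightarrow> int p dvd s \<and> int (\<Prod>S) dvd s"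
    by (simp only: e)
  then show ?case using insert by auto
qed

lemma prod_inj:
  assumes "\<delta> > 0"
  shows "inj_on (\<lambda>S. \<Prod>S) (Pow (prime_factors \<delta>))"
proof (rule inj_onI)
  have pf: "prime_factors (\<Prod>S) = S" if "S \<subseteq> prime_factors \<delta>" for S
  proof -
    have fin: "finite S" using that finite_subset by blast
    have pr: "\<forall>p\<in>S. prime p" using that by auto
    have "0 \<notin> (\<lambda>x. x) ` S" using pr by auto
    then have "prime_factors (\<Prod>S) = (\<Union>x\<in>S. prime_factors x)"
      using prime_factors_prod[OF fin, of "\<lambda>x. x"] by simp
    also have "\<dots> = S" using pr by (auto simp: prime_prime_factors)
    finally show ?thesis .
  qed
  fix S T assume "S \<in> Pow (prime_factors \<delta>)" "T \<in> Pow (prime_factors \<delta>)" "\<Prod>S = \<Prod>T"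
  then show "S = T" using pf by (metis PowD)
qed

lemma Cl_pos: "d \<in> Cl l \<delta> \<Longrightarrow> d > 0"
proof -
  assume "d \<in> Cl l \<delta>"
  then obtain S where S: "d = \<Prod>S" "S \<subseteq> prime_factors \<delta>" unfolding Cl_def by blast
  have "\<And>a. a \<in> S \<Longrightarrow> 0 < a" using S(2) by (auto intro: prime_gt_0_nat)
  then show "d > 0" unfolding S(1) by (rule prod_pos)
qed

lemma mobius:
  fixes s :: int
  assumes "\<delta> > 0"
  shows "(\<Sum>l\<in>{0..card (prime_factors \<delta>)}. (-1)^l * (\<Sum>d\<in>Cl l \<delta>. (if int d dvd s then 1 else 0)))
       = (if \<forall>p\<in>prime_factors \<delta>. \<not> int p dvd s then 1 else (0::complex))"
proof -
  define P where "P = prime_factors \<delta>"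
  define x :: "nat \<Rightarrow> complex" where "x p = (if int p dvd s then 1 else 0)" for p
  have finP: "finite P" unfolding P_def by simp
  have primeP: "\<forall>p\<in>P. prime p" unfolding P_def by auto
  have g: "(if int (\<Prod>S) dvd s then 1 else 0) = (\<Prod>p\<in>S. x p)" if "S \<subseteq> P" for S
  proof -
    have fS: "finite S" using that finP finite_subset by blast
    have pS: "\<forall>p\<in>S. prime p" using that primeP by auto
    show ?thesis
    proof (cases "\<forall>p\<in>S. int p dvd s")
      case True
      then show ?thesis using prod_primes_dvd[OF fS pS] by (simp add: x_def)
    next
      case False
      then have "(\<Prod>p\<in>S. x p) = 0" using fS by (auto simp: x_def prod_zero_iff)
      then show ?thesis using prod_primes_dvd[OF fS pS] False by simp
    qed
  qed
  have cl: "(\<Sum>d\<in>Cl l \<delta>. (if int d dvd s then 1 else (0::complex)))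
          = (\<Sum>S\<in>{S\<in>Pow P. card S = l}. \<Prod>p\<in>S. x p)" for l
  proof -
    have "Cl l \<delta> = (\<lambda>S. \<Prod>S) ` {S\<in>Pow P. card S = l}" unfolding Cl_def P_def by blast
    moreover have "inj_on (\<lambda>S. \<Prod>S) {S\<in>Pow P. card S = l}"
      using prod_inj[OF assms] unfolding P_def by (rule inj_on_subset) blast
    ultimately have "(\<Sum>d\<in>Cl l \<delta>. (if int d dvd s then 1 else (0::complex)))
       = (\<Sum>S\<in>{S\<in>Pow P. card S = l}. (if int (\<Prod>S) dvd s then 1 else 0))"
      by (simp add: sum.reindex)
    also have "\<dots> = (\<Sum>S\<in>{S\<in>Pow P. card S = l}. \<Prod>p\<in>S. x p)"
      by (rule sum.cong, simp, rule g, auto)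
    finally show ?thesis .
  qed
  have "(\<Sum>l\<in>{0..card P}. (-1)^l * (\<Sum>d\<in>Cl l \<delta>. (if int d dvd s then 1 else (0::complex))))
      = (\<Sum>l\<in>{0..card P}. (\<Sum>S\<in>{S\<in>Pow P. card S = l}. (-1)^(card S) * (\<Prod>p\<in>S. x p)))"
    unfolding cl by (simp add: sum_distrib_left)
  also have "\<dots> = (\<Sum>S\<in>Pow P. (-1)^(card S) * (\<Prod>p\<in>S. x p))"
  proof (rule sum.group)
    show "finite (Pow P)" using finP by simp
    show "finite {0..card P}" by simp
    show "card ` Pow P \<subseteq> {0..card P}" using finP by (auto intro: card_mono)
  qed
  also have "\<dots> = (\<Sum>S\<in>Pow P. (\<Prod>p\<in>S. - x p) * (\<Prod>p\<in>P-S. 1))"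
  proof (rule sum.cong)
    fix S assume "S \<in> Pow P"
    then have fS: "finite S" using finP finite_subset by blast
    have "(\<Prod>p\<in>S. - x p) = (\<Prod>p\<in>S. (-1) * x p)" by simp
    also have "\<dots> = (\<Prod>p\<in>S. -1) * (\<Prod>p\<in>S. x p)" by (rule prod.distrib)
    also have "\<dots> = (-1)^(card S) * (\<Prod>p\<in>S. x p)" by (simp only: prod_constant)
    finally show "(-1)^(card S) * (\<Prod>p\<in>S. x p) = (\<Prod>p\<in>S. - x p) * (\<Prod>p\<in>P-S. 1)" by simp
  qed simp
  also have "\<dots> = (\<Prod>p\<in>P. - x p + 1)" by (rule prod_add[OF finP, symmetric])
  also have "\<dots> = (if \<forall>p\<in>P. \<not> int p dvd s then 1 else 0)"
  proof (cases "\<forall>p\<in>P. \<not> int p dvd s")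
    case True
    then show ?thesis by (simp add: x_def)
  next
    case False
    then show ?thesis using finP by (auto simp: x_def prod_zero_iff)
  qed
  finally show ?thesis unfolding P_def .
qed



definition hmap :: "nat \<Rightarrow> nat \<Rightarrow> (int \<times> int) \<times> (int \<times> int) \<Rightarrow> rat^2^2" where
  "hmap \<delta> d y = Phi \<delta> (fst (fst y)) (int d * snd (fst y)) (fst (snd y)) (snd (snd y))"

definition Fib :: "nat \<Rightarrow> nat \<Rightarrow> rat^2^2 \<Rightarrow> ((int \<times> int) \<times> (int \<times> int)) set" where
  "Fib \<delta> d A = {y \<in> (UNIV - {(0, 0)}) \<times> Vset \<delta>. hmap \<delta> d y = A}"

lemma Vneg: "(C, e) \<in> Vset \<delta> \<Longrightarrow> (-C, -e) \<in> Vset \<delta>"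
  unfolding Vset_def by auto

lemma Fib_rep:
  assumes "\<delta> > 0" "d > 0" "(j, s) \<noteq> (0, 0)" "(C, e) \<in> Vset \<delta>"
  shows "Fib \<delta> d (Phi \<delta> j s C e) =
    (if int d dvd s then {((j, s div int d), (C, e)), ((-j, -(s div int d)), (-C, -e))} else {})"
proof (rule set_eqI)
  fix y :: "(int \<times> int) \<times> (int \<times> int)"
  obtain j' p' C' e' where y: "y = ((j', p'), (C', e'))" by (metis prod.collapse)
  have copCe: "coprime C e" using assms(4) unfolding Vset_def by auto
  show "y \<in> Fib \<delta> d (Phi \<delta> j s C e) \<longleftrightarrow>
    y \<in> (if int d dvd s then {((j, s div int d), (C, e)), ((-j, -(s div int d)), (-C, -e))} else {})"
  proof
    assume "y \<in> Fib \<delta> d (Phi \<delta> j s C e)"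
    then have h: "(j', p') \<noteq> (0, 0)" "(C', e') \<in> Vset \<delta>" "Phi \<delta> j' (int d * p') C' e' = Phi \<delta> j s C e"
      unfolding Fib_def hmap_def y by auto
    have cop': "coprime C' e'" using h(2) unfolding Vset_def by auto
    have eqs: "j*C = j'*C' \<and> j*e = j'*e' \<and> s*C = (int d * p')*C' \<and> s*e = (int d * p')*e'"
      using h(3) Phi_eq[OF assms(1)] by metis
    have "(j' = j \<and> int d * p' = s \<and> C' = C \<and> e' = e) \<or> (j' = -j \<and> int d * p' = -s \<and> C' = -C \<and> e' = -e)"
      using rep_unique[OF copCe cop' assms(3)] eqs by blast
    then show "y \<in> (if int d dvd s then {((j, s div int d), (C, e)), ((-j, -(s div int d)), (-C, -e))} else {})"
    proof
      assume a: "j' = j \<and> int d * p' = s \<and> C' = C \<and> e' = e"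
      then have "int d dvd s" by (metis dvd_triv_left)
      moreover have "p' = s div int d" using a assms(2) by auto
      ultimately show ?thesis using a y by simp
    next
      assume a: "j' = -j \<and> int d * p' = -s \<and> C' = -C \<and> e' = -e"
      then have "int d * (-p') = s" by simp
      then have "int d dvd s" by (metis dvd_triv_left)
      moreover have "-p' = s div int d"
      proof -
        have "int d \<noteq> 0" using assms(2) by simp
        then show ?thesis using \<open>int d * (-p') = s\<close> by (metis nonzero_mult_div_cancel_left)
      qed
      ultimately show ?thesis using a y by simp
    qed
  next
    assume y2: "y \<in> (if int d dvd s then {((j, s div int d), (C, e)), ((-j, -(s div int d)), (-C, -e))} else {})"
    then have dv: "int d dvd s" by (auto split: if_splits)
    then have sd: "int d * (s div int d) = s" by simp
    have nz: "(j, s div int d) \<noteq> (0, 0)" using assms(3) sd by auto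
    from y2 dv have "y = ((j, s div int d), (C, e)) \<or> y = ((-j, -(s div int d)), (-C, -e))" by auto
    then show "y \<in> Fib \<delta> d (Phi \<delta> j s C e)"
    proof
      assume "y = ((j, s div int d), (C, e))"
      then show ?thesis using nz assms(4) sd unfolding Fib_def hmap_def by auto
    next
      assume yy: "y = ((-j, -(s div int d)), (-C, -e))"
      have "Phi \<delta> (-j) (int d * - (s div int d)) (-C) (-e) = Phi \<delta> j s C e"
        unfolding Phi_eq[OF assms(1)] using sd by (simp add: algebra_simps)
      then show ?thesis using nz Vneg[OF assms(4)] yy unfolding Fib_def hmap_def by auto
    qed
  qed
qed

lemma Fib_card:
  assumes "\<delta> > 0" "d > 0" "(j, s) \<noteq> (0, 0)" "(C, e) \<in> Vset \<delta>"
  shows "card (Fib \<delta> d (Phi \<delta> j s C e)) = (if int d dvd s then 2 else 0)"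
    "finite (Fib \<delta> d (Phi \<delta> j s C e))"
proof -
  have "(C, e) \<noteq> (-C, -e)" using V_nz[OF assms(4)] by auto
  then show "card (Fib \<delta> d (Phi \<delta> j s C e)) = (if int d dvd s then 2 else 0)"
    unfolding Fib_rep[OF assms] by auto
  show "finite (Fib \<delta> d (Phi \<delta> j s C e))" unfolding Fib_rep[OF assms] by auto
qed

lemma Fib_norep:
  assumes "d > 0" "\<not> (\<exists>j s C e. (j, s) \<noteq> (0, 0) \<and> (C, e) \<in> Vset \<delta> \<and> A = Phi \<delta> j s C e)"
  shows "Fib \<delta> d A = {}"
proof (rule ccontr)
  assume "Fib \<delta> d A \<noteq> {}"
  then obtain j' p' C' e' where h: "(j', p') \<noteq> (0, 0)" "(C', e') \<in> Vset \<delta>" "Phi \<delta> j' (int d * p') C' e' = A"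
    unfolding Fib_def hmap_def by auto
  have "(j', int d * p') \<noteq> (0, 0)" using h(1) assms(1) by auto
  then show False using assms(2) h(2,3) by blast
qed

lemma fiber_sum:
  fixes f :: "'a \<Rightarrow> complex" and h :: "'b \<Rightarrow> 'a"
  assumes "finite S" "\<And>A. A \<notin> S \<Longrightarrow> f A = 0" "\<And>A. A \<in> S \<Longrightarrow> finite {y\<in>I. h y = A}"
  shows "(\<lambda>y. f (h y)) summable_on I"
    "(\<Sum>\<^sub>\<infinity>y\<in>I. f (h y)) = (\<Sum>A\<in>S. f A * of_nat (card {y\<in>I. h y = A}))"
proof -
  define T where "T = {y\<in>I. h y \<in> S}"
  have "T = (\<Union>A\<in>S. {y\<in>I. h y = A})" unfolding T_def by auto
  then have finT: "finite T" using assms(1,3) by auto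
  have TI: "T \<subseteq> I" unfolding T_def by auto
  have z: "f (h y) = 0" if "y \<in> I - T" for y using that assms(2) unfolding T_def by auto
  have "(\<lambda>y. f (h y)) summable_on T" using finT by simp
  then show "(\<lambda>y. f (h y)) summable_on I"
    by (rule summable_on_cong_neutral[THEN iffD1, rotated -1]) (use z TI in auto)
  have "(\<Sum>\<^sub>\<infinity>y\<in>I. f (h y)) = (\<Sum>\<^sub>\<infinity>y\<in>T. f (h y))"
    by (rule infsum_cong_neutral) (use z TI in auto)
  also have "\<dots> = (\<Sum>y\<in>T. f (h y))" using finT by simp
  also have "\<dots> = (\<Sum>A\<in>S. \<Sum>y\<in>{y\<in>T. h y = A}. f (h y))"
    by (rule sum.group[symmetric]) (use finT assms(1) in \<open>auto simp: T_def\<close>)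
  also have "\<dots> = (\<Sum>A\<in>S. f A * of_nat (card {y\<in>I. h y = A}))"
  proof (rule sum.cong)
    fix A assume "A \<in> S"
    then have "{y\<in>T. h y = A} = {y\<in>I. h y = A}" unfolding T_def by auto
    then show "(\<Sum>y\<in>{y\<in>T. h y = A}. f (h y)) = f A * of_nat (card {y\<in>I. h y = A})"
      by simp
  qed simp
  finally show "(\<Sum>\<^sub>\<infinity>y\<in>I. f (h y)) = (\<Sum>A\<in>S. f A * of_nat (card {y\<in>I. h y = A}))" .
qed



lemma perA:
  assumes "\<delta> > 0"
  shows "(\<Sum>l\<in>{0..card (prime_factors \<delta>)}. (-1)^l * (\<Sum>d\<in>Cl l \<delta>. (of_nat (card (Fib \<delta> d A))::complex)))
       = 2 * (if A \<in> Lset \<delta> then 1 else 0)"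
proof (cases "\<exists>j s C e. (j, s) \<noteq> (0, 0) \<and> (C, e) \<in> Vset \<delta> \<and> A = Phi \<delta> j s C e")
  case True
  then obtain j s C e where h: "(j, s) \<noteq> (0, 0)" "(C, e) \<in> Vset \<delta>" "A = Phi \<delta> j s C e" by blast
  have c: "(of_nat (card (Fib \<delta> d A))::complex) = 2 * (if int d dvd s then 1 else 0)" if "d \<in> Cl l \<delta>" for d l
    using Fib_card(1)[OF assms Cl_pos[OF that] h(1,2)] h(3) by simp
  have "(\<Sum>l\<in>{0..card (prime_factors \<delta>)}. (-1)^l * (\<Sum>d\<in>Cl l \<delta>. (of_nat (card (Fib \<delta> d A))::complex)))
      = (\<Sum>l\<in>{0..card (prime_factors \<delta>)}. (-1)^l * (\<Sum>d\<in>Cl l \<delta>. 2 * (if int d dvd s then 1 else 0)))"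
    by (intro sum.cong refl arg_cong2[where f="(*)"]) (simp add: c)
  also have "\<dots> = 2 * (\<Sum>l\<in>{0..card (prime_factors \<delta>)}. (-1)^l * (\<Sum>d\<in>Cl l \<delta>. (if int d dvd s then 1 else 0)))"
    by (simp add: sum_distrib_left mult_ac)
  also have "\<dots> = 2 * (if \<forall>p\<in>prime_factors \<delta>. \<not> int p dvd s then 1 else 0)"
    by (simp only: mobius[OF assms])
  also have "\<dots> = 2 * (if A \<in> Lset \<delta> then 1 else 0)"
    using Phi_in_L[OF assms h(1,2)] h(3) by simp
  finally show ?thesis .
next
  case False
  have "Fib \<delta> d A = {}" if "d \<in> Cl l \<delta>" for d l
    using Fib_norep[OF Cl_pos[OF that] False] .
  moreover have "A \<notin> Lset \<delta>" using exists_rep[OF assms] False by blast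
  ultimately show ?thesis by simp
qed

lemma Rd:
  fixes f :: "rat^2^2 \<Rightarrow> complex"
  assumes "\<delta> > 0" "d > 0" "finite S" "\<And>A. A \<notin> S \<Longrightarrow> f A = 0"
  shows "(\<Sum>\<^sub>\<infinity>(j, p)\<in>(UNIV :: (int \<times> int) set) - {(0, 0)}.
            (\<Sum>\<^sub>\<infinity>X\<in>Gamma0_mod_T \<delta>.
               f (mat2 0 (of_int j) 0 (of_nat d / of_nat \<delta> * of_int p) ** (SOME P. P \<in> X))))
       = (\<Sum>A\<in>S. f A * of_nat (card (Fib \<delta> d A)))"
proof -
  define U0 where "U0 = (UNIV :: (int \<times> int) set) - {(0, 0)}"
  have fib: "\<And>A. A \<in> S \<Longrightarrow> finite {y\<in>U0 \<times> Vset \<delta>. hmap \<delta> d y = A}"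
  proof -
    fix A
    have "{y\<in>U0 \<times> Vset \<delta>. hmap \<delta> d y = A} = Fib \<delta> d A" unfolding Fib_def U0_def by simp
    moreover have "finite (Fib \<delta> d A)"
    proof (cases "\<exists>j s C e. (j, s) \<noteq> (0, 0) \<and> (C, e) \<in> Vset \<delta> \<and> A = Phi \<delta> j s C e")
      case True
      then show ?thesis using Fib_card(2)[OF assms(1,2)] by blast
    next
      case False
      then show ?thesis using Fib_norep[OF assms(2) False] by simp
    qed
    ultimately show "finite {y\<in>U0 \<times> Vset \<delta>. hmap \<delta> d y = A}" by simp
  qed
  note fs = fiber_sum[OF assms(3,4) fib]
  have dpos: "(of_nat \<delta> :: rat) \<noteq> 0" using assms(1) by simp
  have step1: "(\<Sum>\<^sub>\<infinity>(j, p)\<in>U0. (\<Sum>\<^sub>\<infinity>X\<in>Gamma0_mod_T \<delta>.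
               f (mat2 0 (of_int j) 0 (of_nat d / of_nat \<delta> * of_int p) ** (SOME P. P \<in> X))))
     = (\<Sum>\<^sub>\<infinity>x\<in>U0. (\<Sum>\<^sub>\<infinity>v\<in>Vset \<delta>. f (hmap \<delta> d (x, v))))"
  proof (rule infsum_cong)
    fix x :: "int \<times> int"
    obtain j p where x: "x = (j, p)" by fastforce
    have "(\<Sum>\<^sub>\<infinity>X\<in>Gamma0_mod_T \<delta>.
               f (mat2 0 (of_int j) 0 (of_nat d / of_nat \<delta> * of_int p) ** (SOME P. P \<in> X)))
        = (\<Sum>\<^sub>\<infinity>v\<in>Vset \<delta>. f (hmap \<delta> d (x, v)))"
      unfolding inner_reindex
    proof (rule infsum_cong)
      fix v :: "int \<times> int"
      have "mat2 (of_int j * of_int (fst v)) (of_int j * of_int (snd v))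
             (of_nat d / of_nat \<delta> * of_int p * of_int (fst v)) (of_nat d / of_nat \<delta> * of_int p * of_int (snd v))
            = hmap \<delta> d (x, v)"
        unfolding hmap_def Phi_def x mat2_eq_iff using dpos by simp
      then show "f (mat2 (of_int j * of_int (fst v)) (of_int j * of_int (snd v))
             (of_nat d / of_nat \<delta> * of_int p * of_int (fst v)) (of_nat d / of_nat \<delta> * of_int p * of_int (snd v)))
            = f (hmap \<delta> d (x, v))" by simp
    qed
    then show "(\<lambda>(j, p). \<Sum>\<^sub>\<infinity>X\<in>Gamma0_mod_T \<delta>.
               f (mat2 0 (of_int j) 0 (of_nat d / of_nat \<delta> * of_int p) ** (SOME P. P \<in> X))) x
          = (\<Sum>\<^sub>\<infinity>v\<in>Vset \<delta>. f (hmap \<delta> d (x, v)))" unfolding x by simp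
  qed
  have eqf: "(\<lambda>(x, y). f (hmap \<delta> d (x, y))) = (\<lambda>y. f (hmap \<delta> d y))" by auto
  have summ: "(\<lambda>(x, y). f (hmap \<delta> d (x, y))) summable_on (Sigma U0 (\<lambda>_. Vset \<delta>))"
    unfolding eqf using fs(1) .
  have "(\<Sum>\<^sub>\<infinity>x\<in>U0. (\<Sum>\<^sub>\<infinity>v\<in>Vset \<delta>. f (hmap \<delta> d (x, v))))
      = (\<Sum>\<^sub>\<infinity>(x, y)\<in>Sigma U0 (\<lambda>_. Vset \<delta>). f (hmap \<delta> d (x, y)))"
    by (rule infsum_Sigma'_banach[OF summ])
  also have "\<dots> = (\<Sum>\<^sub>\<infinity>y\<in>U0 \<times> Vset \<delta>. f (hmap \<delta> d y))" unfolding eqf by simp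
  also have "\<dots> = (\<Sum>A\<in>S. f A * of_nat (card {y\<in>U0 \<times> Vset \<delta>. hmap \<delta> d y = A}))" by (rule fs(2))
  also have "\<dots> = (\<Sum>A\<in>S. f A * of_nat (card (Fib \<delta> d A)))"
    unfolding Fib_def U0_def by simp
  finally show ?thesis using step1 unfolding U0_def by simp
qed



theorem lemma4p6:
  fixes \<delta> :: nat and f :: "rat^2^2 \<Rightarrow> complex"
  assumes "\<delta> > 0"
    and "finite {A. f A \<noteq> 0}"
  shows "(\<Sum>\<^sub>\<infinity>A\<in>{A \<in> Mdelta \<delta>. A \<noteq> 0 \<and> det A = 0 \<and>
              (\<forall>p\<in>prime_factors \<delta>. \<not> int p dvd \<lfloor>of_nat \<delta> * A $ 2 $ 2\<rfloor>)}. f A)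
       = 1/2 * (\<Sum>l\<in>{0..card (prime_factors \<delta>)}. (-1)^l *
           (\<Sum>d\<in>Cl l \<delta>.
              (\<Sum>\<^sub>\<infinity>(j, p)\<in>(UNIV :: (int \<times> int) set) - {(0, 0)}.
                 (\<Sum>\<^sub>\<infinity>X\<in>Gamma0_mod_T \<delta>.
                    f (mat2 0 (of_int j) 0 (of_nat d / of_nat \<delta> * of_int p) ** (SOME P. P \<in> X))))))"
proof -
  define S where "S = {A. f A \<noteq> 0}"
  have finS: "finite S" using assms(2) unfolding S_def .
  have z: "\<And>A. A \<notin> S \<Longrightarrow> f A = 0" unfolding S_def by auto
  define K where "K A = (\<Sum>l\<in>{0..card (prime_factors \<delta>)}. (-1)^l * (\<Sum>d\<in>Cl l \<delta>. (of_nat (card (Fib \<delta> d A))::complex)))" for A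
  have lhs: "(\<Sum>\<^sub>\<infinity>A\<in>Lset \<delta>. f A) = (\<Sum>A\<in>S. f A * (if A \<in> Lset \<delta> then 1 else 0))"
  proof -
    have fin1: "\<And>A. A \<in> S \<Longrightarrow> finite {y\<in>Lset \<delta>. y = A}" by simp
    have "(\<Sum>\<^sub>\<infinity>A\<in>Lset \<delta>. f A) = (\<Sum>A\<in>S. f A * of_nat (card {y\<in>Lset \<delta>. y = A}))"
      using fiber_sum(2)[OF finS z fin1] by simp
    also have "\<dots> = (\<Sum>A\<in>S. f A * (if A \<in> Lset \<delta> then 1 else 0))"
    proof (rule sum.cong)
      fix A
      have "{y\<in>Lset \<delta>. y = A} = (if A \<in> Lset \<delta> then {A} else {})" by auto
      then show "f A * of_nat (card {y\<in>Lset \<delta>. y = A}) = f A * (if A \<in> Lset \<delta> then 1 else 0)"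
        by simp
    qed simp
    finally show ?thesis .
  qed
  have "1/2 * (\<Sum>l\<in>{0..card (prime_factors \<delta>)}. (-1)^l *
           (\<Sum>d\<in>Cl l \<delta>.
              (\<Sum>\<^sub>\<infinity>(j, p)\<in>(UNIV :: (int \<times> int) set) - {(0, 0)}.
                 (\<Sum>\<^sub>\<infinity>X\<in>Gamma0_mod_T \<delta>.
                    f (mat2 0 (of_int j) 0 (of_nat d / of_nat \<delta> * of_int p) ** (SOME P. P \<in> X))))))
     = 1/2 * (\<Sum>l\<in>{0..card (prime_factors \<delta>)}. (-1)^l *
           (\<Sum>d\<in>Cl l \<delta>. (\<Sum>A\<in>S. f A * of_nat (card (Fib \<delta> d A)))))"
    by (intro arg_cong2[where f="(*)"] refl sum.cong Rd[OF assms(1) Cl_pos finS z]) auto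
  also have "\<dots> = 1/2 * (\<Sum>l\<in>{0..card (prime_factors \<delta>)}. (\<Sum>A\<in>S. f A * ((-1)^l *
           (\<Sum>d\<in>Cl l \<delta>. of_nat (card (Fib \<delta> d A))))))"
    by (simp add: sum_distrib_left sum.swap[where A="Cl _ \<delta>"] mult_ac)
  also have "\<dots> = 1/2 * (\<Sum>A\<in>S. f A * K A)"
    unfolding K_def by (simp add: sum_distrib_left sum.swap[where B=S])
  also have "\<dots> = (\<Sum>A\<in>S. f A * (1/2 * K A))"
    by (simp add: sum_distrib_left mult_ac)
  also have "\<dots> = (\<Sum>A\<in>S. f A * (if A \<in> Lset \<delta> then 1 else 0))"
    unfolding K_def perA[OF assms(1)] by simp
  finally have R: "1/2 * (\<Sum>l\<in>{0..card (prime_factors \<delta>)}. (-1)^l *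
           (\<Sum>d\<in>Cl l \<delta>.
              (\<Sum>\<^sub>\<infinity>(j, p)\<in>(UNIV :: (int \<times> int) set) - {(0, 0)}.
                 (\<Sum>\<^sub>\<infinity>X\<in>Gamma0_mod_T \<delta>.
                    f (mat2 0 (of_int j) 0 (of_nat d / of_nat \<delta> * of_int p) ** (SOME P. P \<in> X))))))
     = (\<Sum>A\<in>S. f A * (if A \<in> Lset \<delta> then 1 else 0))" .
  show ?thesis using lhs R by (simp only: Lset_def)
qed

end
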